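(* Let $p(z)$ be any non-constant polynomial with roots $r_1,\dots,r_n$ of multiplicities $M_1,\dots,M_n$. Then $p$ satisfies the generalised root identities for all $\mu\in\mathbb{C}$ and all $z_0\in\mathbb{C}$ off the branch cuts, that is, $$d_p(z_0,\mu)=e^{i\pi\mu}\sum_{i=1}^n\frac{M_i}{(z_0-r_i)^{\mu}}.$$ When $\mu\notin\mathbb{Z}$, "off the branch cuts" means $z_0\notin\bigcup_i\big(r_i+(-\infty,0]\big)$. This holds in particular for every $z_0$ with $\operatorname{Re}(z_0)>\max_i\operatorname{Re}(r_i)$.
   Context: Powers $w^{\mu}$ use the principal branch. For a function $f$, the derivative side of the generalised root identities is $$d_f(z_0,\mu)=-\frac{1}{\Gamma(\mu)}\frac{1}{2\pi}\int_{-\infty}^{\infty}(i\xi)^{\mu}\,\mathcal{F}[\ln f](\xi)\,e^{iz_0\xi}\,d\xi,$$ where $\mathcal{F}$ is the Fourier transform (with $\mathcal{F}[g(\cdot+a)](\xi)=\mathcal{F}[g](\xi)e^{ia\xi}$) and $\mathcal{F}[\ln z](\xi)=-2\pi\tilde H_0(\xi)/\xi$. Here $\tilde H_0(\xi)=\tfrac12$ for $\xi>0$ and $-\tfrac12$ for $\xi<0$. The branch of $(i\xi)^{\mu}$ is $e^{i\pi\mu/2}\xi^{\mu}$ for $\xi>0$ and $e^{3i\pi\mu/2}|\xi|^{\mu}$ for $\xi<0$. The integral is understood as follows: as an ordinary $\mu$-th derivative $-\frac{1}{\Gamma(\mu)}(d/dz)^{\mu}\ln f|_{z_0}$ for positive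 integer $\mu$; distributionally (via derivatives of the Dirac delta) for $\mu\in\mathbb{Z}_{\le0}$; and by analytic continuation in $(z_0,\mu)$ otherwise. For $f$ a polynomial, $\ln f$ is the sum of the logarithms of its linear factors. The root side is $e^{i\pi\mu}\sum_i M_i(z_0-r_i)^{-\mu}$, summed over the roots $r_i$ of $f$ with multiplicities $M_i$. *)

theory Defs
  imports "HOL-Complex_Analysis.Complex_Analysis" "HOL-Computational_Algebra.Polynomial"
begin

text \<open>Roots of a complex polynomial; multiplicity is the library notion order r p.\<close>

definition roots_of :: "complex poly \<Rightarrow> complex set" where
  "roots_of p = {r. poly p r = 0}"

definition Htil :: "real \<Rightarrow> complex" where
  "Htil xi = (if xi > 0 then 1/2 else if xi < 0 then -1/2 else 0)"

text \<open>The branch of (i xi)^mu prescribed in the paper.\<close>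

definition ipow :: "real \<Rightarrow> complex \<Rightarrow> complex" where
  "ipow xi mu =
     (if xi > 0 then exp (\<i> * pi * mu / 2) * (of_real xi) powr mu
      else if xi < 0 then exp (3 * \<i> * pi * mu / 2) * (of_real \<bar>xi\<bar>) powr mu
      else 0)"

text \<open>Fourier transform of ln z: F[ln z](xi) = -2 pi H0(xi)/xi.\<close>

definition FT_ln :: "real \<Rightarrow> complex" where
  "FT_ln xi = - 2 * of_real pi * Htil xi / of_real xi"

text \<open>Fourier transform of ln p = sum of M_r ln(z - r) over the roots, using the shift rule
  F[g(. + a)](xi) = F[g](xi) e^{i a xi} with a = -r.\<close>

definition FT_ln_poly :: "complex poly \<Rightarrow> real \<Rightarrow> complex" where
  "FT_ln_poly p xi =
     (\<Sum>r\<in>roots_of p. of_nat (order r p) * (FT_ln xi * exp (\<i> * (- r) * of_real xi)))"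

definition gri_integrand :: "complex poly \<Rightarrow> complex \<Rightarrow> complex \<Rightarrow> real \<Rightarrow> complex" where
  "gri_integrand p z0 mu xi =
     - rGamma mu / (2 * of_real pi) * ipow xi mu * FT_ln_poly p xi * exp (\<i> * z0 * of_real xi)"

text \<open>The two half-line parts of the integral (each converges on its own region).\<close>

definition gri_plus :: "complex poly \<Rightarrow> complex \<Rightarrow> complex \<Rightarrow> complex" where
  "gri_plus p z0 mu = (LINT xi:{0<..}|lborel. gri_integrand p z0 mu xi)"

definition gri_minus :: "complex poly \<Rightarrow> complex \<Rightarrow> complex \<Rightarrow> complex" where
  "gri_minus p z0 mu = (LINT xi:{..<0}|lborel. gri_integrand p z0 mu xi)"

definition conv_plus :: "complex poly \<Rightarrow> (complex \<times> complex) set" where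
  "conv_plus p = {(z, mu). 0 < Re mu \<and> (\<forall>r\<in>roots_of p. 0 < Im (z - r))}"

definition conv_minus :: "complex poly \<Rightarrow> (complex \<times> complex) set" where
  "conv_minus p = {(z, mu). 0 < Re mu \<and> (\<forall>r\<in>roots_of p. Im (z - r) < 0)}"

text \<open>Natural z-domains of the continuations of the two halves (cuts r - i[0,oo), r + i[0,oo)),
  of the final function (cuts r + (-oo,0]), and the right region where the halves are added.\<close>

definition dom_plus :: "complex poly \<Rightarrow> complex set" where
  "dom_plus p = {z. \<forall>r\<in>roots_of p. \<forall>t::real. t \<ge> 0 \<longrightarrow> z \<noteq> r - \<i> * of_real t}"

definition dom_minus :: "complex poly \<Rightarrow> complex set" where
  "dom_minus p = {z. \<forall>r\<in>roots_of p. \<forall>t::real. t \<ge> 0 \<longrightarrow> z \<noteq> r + \<i> * of_real t}"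

definition cut_domain :: "complex poly \<Rightarrow> complex set" where
  "cut_domain p = {z. \<forall>r\<in>roots_of p. \<forall>t::real. t \<le> 0 \<longrightarrow> z \<noteq> r + of_real t}"

definition right_region :: "complex poly \<Rightarrow> complex set" where
  "right_region p = {z. \<forall>r\<in>roots_of p. Re r < Re z}"

text \<open>Analyticity in (z, mu) on A x C, expressed as separate holomorphy
  (equivalent to joint holomorphy by Hartogs' theorem).\<close>

definition sep_holo :: "(complex \<Rightarrow> complex \<Rightarrow> complex) \<Rightarrow> complex set \<Rightarrow> bool" where
  "sep_holo D A \<longleftrightarrow> (\<forall>mu. (\<lambda>z. D z mu) holomorphic_on A) \<and> (\<forall>z\<in>A. (\<lambda>mu. D z mu) holomorphic_on UNIV)"

definition is_cont_plus :: "complex poly \<Rightarrow> (complex \<Rightarrow> complex \<Rightarrow> complex) \<Rightarrow> bool" where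
  "is_cont_plus p G \<longleftrightarrow> sep_holo G (dom_plus p) \<and> (\<forall>(z, mu)\<in>conv_plus p. G z mu = gri_plus p z mu)"

definition is_cont_minus :: "complex poly \<Rightarrow> (complex \<Rightarrow> complex \<Rightarrow> complex) \<Rightarrow> bool" where
  "is_cont_minus p G \<longleftrightarrow> sep_holo G (dom_minus p) \<and> (\<forall>(z, mu)\<in>conv_minus p. G z mu = gri_minus p z mu)"

text \<open>D is the analytic continuation (in (z0, mu)) of the integral defining d_p.\<close>

definition is_dp_cont :: "complex poly \<Rightarrow> (complex \<Rightarrow> complex \<Rightarrow> complex) \<Rightarrow> bool" where
  "is_dp_cont p D \<longleftrightarrow> sep_holo D (cut_domain p) \<and>
     (\<exists>Gp Gm. is_cont_plus p Gp \<and> is_cont_minus p Gm \<and>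
        (\<forall>z\<in>right_region p. \<forall>mu. D z mu = Gp z mu + Gm z mu))"

text \<open>The derivative side d_p(z0, mu):
  positive integer mu: ordinary mu-th derivative of ln p (i.e. (mu-1)-th derivative of p'/p);
  non-positive integer mu: the (entire) extension in z0 of the continuation at that mu;
  otherwise: the analytic continuation.\<close>

definition dp :: "complex poly \<Rightarrow> complex \<Rightarrow> complex \<Rightarrow> complex" where
  "dp p z0 mu =
     (if mu \<in> \<int> \<and> 0 < Re mu then
        - rGamma mu * (deriv ^^ (nat \<lfloor>Re mu\<rfloor> - 1)) (\<lambda>z. poly (pderiv p) z / poly p z) z0
      else if mu \<in> \<int> then
        (THE v. \<exists>D E. is_dp_cont p D \<and> E holomorphic_on UNIV \<and>
                 (\<forall>z\<in>cut_domain p. E z = D z mu) \<and> E z0 = v)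
      else (THE v. \<exists>D. is_dp_cont p D \<and> D z0 mu = v))"

end

theory Submission
  imports Defs "HOL-Computational_Algebra.Fundamental_Theorem_Algebra"
begin

lemma base_lebesgue:
  assumes "Re \<nu> > 0"
  shows "set_integrable lborel {0<..} (\<lambda>t. of_real t powr (\<nu> - 1) / of_real (exp t))"
    "(LINT t:{0<..}|lborel. of_real t powr (\<nu> - 1) / of_real (exp t)) = Gamma \<nu>"
proof -
  have ai: "(\<lambda>t. complex_of_real t powr (\<nu> - 1) / of_real (exp t)) absolutely_integrable_on {0<..}"
    using absolutely_integrable_Gamma_integral'[OF assms] .
  have meas: "(\<lambda>t. indicator {0<..} t *\<^sub>R (complex_of_real t powr (\<nu> - 1) / of_real (exp t))) \<in> borel_measurable borel"
    by (rule borel_measurable_continuous_on_indicator) (auto intro!: continuous_intros)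
  show si: "set_integrable lborel {0<..} (\<lambda>t. of_real t powr (\<nu> - 1) / of_real (exp t))"
    using ai meas integrable_completion[of "\<lambda>t. indicator {0<..} t *\<^sub>R (complex_of_real t powr (\<nu> - 1) / of_real (exp t))" lborel]
    unfolding set_integrable_def by (simp add: measurable_lborel1)
  show "(LINT t:{0<..}|lborel. of_real t powr (\<nu> - 1) / of_real (exp t)) = Gamma \<nu>"
    using set_borel_integral_eq_integral(2)[OF si] Gamma_integral_complex'[OF assms]
    by (simp add: integral_unique)
qed

lemma base_scaled:
  assumes "Re \<nu> > 0" "b > 0"
  shows "set_integrable lborel {0<..} (\<lambda>t. of_real t powr (\<nu> - 1) * exp (- (of_real b * of_real t)))"
    "(LINT t:{0<..}|lborel. of_real t powr (\<nu> - 1) * exp (- (of_real b * of_real t))) = Gamma \<nu> * of_real b powr (- \<nu>)"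
proof -
  define f where "f = (\<lambda>t. indicator {0<..} t *\<^sub>R (complex_of_real t powr (\<nu> - 1) / of_real (exp t)))"
  define h where "h = (\<lambda>t. indicator {0<..} t *\<^sub>R (complex_of_real t powr (\<nu> - 1) * exp (- (of_real b * of_real t))))"
  have fi: "integrable lborel f" using base_lebesgue(1)[OF assms(1)] by (simp add: f_def set_integrable_def)
  have fint: "integral\<^sup>L lborel f = Gamma \<nu>" using base_lebesgue(2)[OF assms(1)] by (simp add: f_def set_lebesgue_integral_def)
  have eq: "f (0 + b * x) = of_real b powr (\<nu> - 1) * h x" for x
  proof (cases "x > 0")
    case True
    have "complex_of_real (b * x) powr (\<nu> - 1) = of_real b powr (\<nu> - 1) * of_real x powr (\<nu> - 1)"
      using True assms by (subst of_real_mult, intro powr_times_real) auto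
    moreover have "1 / complex_of_real (exp (b * x)) = exp (- (of_real b * of_real x))"
      by (simp add: exp_minus of_real_exp divide_inverse)
    ultimately show ?thesis using True assms
      by (simp add: f_def h_def divide_inverse exp_minus mult_ac of_real_exp)
  next
    case False
    then show ?thesis using assms by (simp add: f_def h_def indicator_def zero_less_mult_iff)
  qed
  have "integrable lborel (\<lambda>x. f (0 + b * x))"
    using lborel_integrable_real_affine[OF fi, of b 0] assms by simp
  hence "integrable lborel (\<lambda>x. of_real b powr (\<nu> - 1) * h x)" by (simp only: eq)
  moreover have nz: "complex_of_real b powr (\<nu> - 1) \<noteq> 0" using assms by (simp add: powr_def)
  ultimately have hi: "integrable lborel h"
    using integrable_mult_right[of "inverse (complex_of_real b powr (\<nu> - 1))" lborel "\<lambda>x. of_real b powr (\<nu> - 1) * h x"]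
    by (simp add: nz mult.assoc[symmetric])
  thus "set_integrable lborel {0<..} (\<lambda>t. of_real t powr (\<nu> - 1) * exp (- (of_real b * of_real t)))"
    by (simp add: h_def set_integrable_def)
  have "Gamma \<nu> = \<bar>b\<bar> *\<^sub>R (\<integral>x. f (0 + b * x) \<partial>lborel)"
    using fint lborel_integral_real_affine[of b f 0] assms by simp
  also have "\<dots> = of_real b * (of_real b powr (\<nu> - 1) * integral\<^sup>L lborel h)"
  proof -
    have e2: "(\<lambda>x. f (0 + b * x)) = (\<lambda>x. of_real b powr (\<nu> - 1) * h x)" using eq by auto
    show ?thesis using assms by (simp only: e2 integral_mult_right_zero) (simp add: scaleR_conv_of_real)
  qed
  finally have G: "Gamma \<nu> = of_real b * (of_real b powr (\<nu> - 1) * integral\<^sup>L lborel h)" .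
  have bb: "complex_of_real b * of_real b powr (\<nu> - 1) = of_real b powr \<nu>"
    using assms by (simp add: powr_diff)
  have "integral\<^sup>L lborel h = Gamma \<nu> * of_real b powr (- \<nu>)"
  proof -
    have "Gamma \<nu> = of_real b powr \<nu> * integral\<^sup>L lborel h"
      using G bb by (metis mult.assoc)
    moreover have "complex_of_real b powr \<nu> \<noteq> 0" using assms by (simp add: powr_def)
    ultimately show ?thesis by (simp add: powr_minus field_simps)
  qed
  thus "(LINT t:{0<..}|lborel. of_real t powr (\<nu> - 1) * exp (- (of_real b * of_real t))) = Gamma \<nu> * of_real b powr (- \<nu>)"
    by (simp add: h_def set_lebesgue_integral_def)
qed

lemma Re_pos_not_nonpos_Int: "Re (z::complex) > 0 \<Longrightarrow> z \<notin> \<int>\<^sub>\<le>\<^sub>0"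
  by (auto elim!: nonpos_Ints_cases)

lemma coef_id:
  assumes "Re \<mu> > 0" "b > 0"
  shows "Gamma (\<mu> + of_nat k) * of_real b powr (-(\<mu> + of_nat k)) * (u^k / fact k)
       = Gamma \<mu> * of_real b powr (-\<mu>) * (((-\<mu>) gchoose k) * (-u / of_real b)^k)"
proof -
  have nz: "\<mu> \<notin> \<int>\<^sub>\<le>\<^sub>0" using Re_pos_not_nonpos_Int assms by blast
  have G: "Gamma (\<mu> + of_nat k) = pochhammer \<mu> k * Gamma \<mu>"
    using pochhammer_Gamma[OF nz, of k] Gamma_nonzero[OF nz] by simp
  have P: "complex_of_real b powr (-(\<mu> + of_nat k)) = of_real b powr (-\<mu>) / of_real b ^ k"
  proof -
    have "complex_of_real b powr (-(\<mu> + of_nat k)) = of_real b powr (-\<mu> - of_nat k)" by simp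
    also have "\<dots> = of_real b powr (-\<mu>) / of_real b powr (of_nat k)" by (rule powr_diff)
    also have "of_real b powr (of_nat k) = (of_real b :: complex) ^ k" using assms by (intro powr_nat') simp
    finally show ?thesis .
  qed
  have B: "(-\<mu>) gchoose k = (-1)^k * pochhammer \<mu> k / fact k"
    by (simp add: gbinomial_pochhammer)
  have U: "(-u / complex_of_real b)^k = (-1)^k * u^k / of_real b ^ k"
    by (metis power_divide power_minus)
  have M: "(-1::complex)^k * (-1)^k = 1" by (simp add: power_mult_distrib[symmetric])
  have "Gamma \<mu> * of_real b powr (-\<mu>) * (((-\<mu>) gchoose k) * (-u / of_real b)^k)
      = Gamma \<mu> * of_real b powr (-\<mu>) * (((-1)^k * (-1)^k) * pochhammer \<mu> k * u^k / (fact k * of_real b ^ k))"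
    unfolding B U by (simp add: mult_ac)
  also have "\<dots> = pochhammer \<mu> k * Gamma \<mu> * (of_real b powr (-\<mu>) / of_real b ^ k) * (u^k / fact k)"
    unfolding M by (simp add: mult_ac)
  finally show ?thesis unfolding G P by simp
qed

lemma key_integral:
  assumes "Re a > 0" "Re \<mu> > 0"
  shows "set_integrable lborel {0<..} (\<lambda>t. of_real t powr (\<mu> - 1) * exp (- (a * of_real t)))"
    "(LINT t:{0<..}|lborel. of_real t powr (\<mu> - 1) * exp (- (a * of_real t))) = Gamma \<mu> * a powr (-\<mu>)"
proof -
  define b where "b = (cmod a)^2 / Re a + 1"
  have b0: "b > 0" using assms by (simp add: b_def add_nonneg_pos)
  have bRe: "b * Re a = (cmod a)^2 + Re a" using assms by (simp add: b_def field_simps)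
  define w where "w = a - of_real b"
  have wb: "cmod w < b"
  proof -
    have "(cmod w)^2 = (Re a - b)^2 + (Im a)^2" by (simp add: w_def cmod_power2)
    also have "\<dots> = (cmod a)^2 - 2 * (b * Re a) + b^2" unfolding cmod_power2 by (simp add: power2_eq_square algebra_simps)
    also have "\<dots> < b^2" using bRe assms zero_le_power2[of "cmod a"] by linarith
    finally have "(cmod w)^2 < b^2" .
    thus ?thesis using b0 by (simp add: power_less_imp_less_base)
  qed
  have wbn: "norm (w / of_real b) < 1" using wb b0 by (simp add: norm_divide)
  define g where "g = (\<lambda>t. complex_of_real t powr (\<mu> - 1) * exp (- (a * of_real t)))"
  define f where "f = (\<lambda>k t. (indicator {0<..} t *\<^sub>R (complex_of_real t powr (\<mu> + of_nat k - 1) * exp (- (of_real b * of_real t)))) * ((-w)^k / fact k))"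
  have Re_k: "Re (\<mu> + of_nat k) > 0" for k using assms by simp
  have fi: "integrable lborel (f k)" for k
    using base_scaled(1)[OF Re_k b0, of k] unfolding f_def set_integrable_def
    by (intro integrable_mult_left) simp
  have fint: "integral\<^sup>L lborel (f k) = Gamma (\<mu> + of_nat k) * of_real b powr (-(\<mu> + of_nat k)) * ((-w)^k / fact k)" for k
    using base_scaled(2)[OF Re_k b0, of k] unfolding f_def set_lebesgue_integral_def integral_mult_left_zero
    by simp
  have fsums: "(\<lambda>k. f k t) sums (indicator {0<..} t *\<^sub>R g t)" for t
  proof (cases "t > 0")
    case True
    define x where "x = - w * of_real t"
    have pw: "complex_of_real t powr (\<mu> + of_nat k - 1) = of_real t powr (\<mu> - 1) * of_real t ^ k" for k
    proof -
      have "complex_of_real t powr (\<mu> + of_nat k - 1) = of_real t powr ((\<mu> - 1) + of_nat k)" by (simp add: algebra_simps)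
      also have "\<dots> = of_real t powr (\<mu> - 1) * of_real t powr of_nat k" by (rule powr_add)
      also have "of_real t powr of_nat k = (of_real t :: complex) ^ k" using True by (intro powr_nat') simp
      finally show ?thesis .
    qed
    have fk: "f k t = (of_real t powr (\<mu> - 1) * exp (- (of_real b * of_real t))) * (x^k /\<^sub>R fact k)" for k
      using True by (simp add: f_def pw x_def power_mult_distrib[symmetric] scaleR_conv_of_real divide_inverse mult_ac)
    have "(\<lambda>k. (of_real t powr (\<mu> - 1) * exp (- (of_real b * of_real t))) * (x^k /\<^sub>R fact k)) sums
          ((of_real t powr (\<mu> - 1) * exp (- (of_real b * of_real t))) * exp x)"
      by (intro sums_mult exp_converges)
    moreover have "(of_real t powr (\<mu> - 1) * exp (- (of_real b * of_real t))) * exp x = indicator {0<..} t *\<^sub>R g t"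
    proof -
      have "exp (- (of_real b * of_real t)) * exp x = exp (- (a * of_real t))"
        by (simp add: x_def w_def exp_add[symmetric] algebra_simps)
      thus ?thesis using True by (simp add: g_def mult.assoc)
    qed
    ultimately show ?thesis by (simp only: fk)
  next
    case False
    thus ?thesis by (simp add: f_def)
  qed
  have fnorm: "summable (\<lambda>k. norm (f k t))" for t
  proof (cases "t > 0")
    case True
    define x where "x = - w * of_real t"
    define C where "C = complex_of_real t powr (\<mu> - 1) * exp (- (of_real b * of_real t))"
    have fk: "f k t = C * (x^k /\<^sub>R fact k)" for k
    proof -
      have pw: "complex_of_real t powr (\<mu> + of_nat k - 1) = of_real t powr (\<mu> - 1) * of_real t ^ k"
      proof -
        have "complex_of_real t powr (\<mu> + of_nat k - 1) = of_real t powr ((\<mu> - 1) + of_nat k)" by (simp add: algebra_simps)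
        also have "\<dots> = of_real t powr (\<mu> - 1) * of_real t powr of_nat k" by (rule powr_add)
        also have "of_real t powr of_nat k = (of_real t :: complex) ^ k" using True by (intro powr_nat') simp
        finally show ?thesis .
      qed
      show ?thesis
        using True by (simp add: f_def pw x_def C_def power_mult_distrib[symmetric] scaleR_conv_of_real divide_inverse mult_ac)
    qed
    moreover have "summable (\<lambda>k. norm C * norm (x^k /\<^sub>R fact k))"
      by (intro summable_mult summable_norm_exp)
    moreover have "(\<lambda>k. norm (f k t)) = (\<lambda>k. norm C * norm (x^k /\<^sub>R fact k))"
      by (rule ext, simp only: fk norm_mult)
    ultimately show ?thesis by simp
  next
    case False
    thus ?thesis by (simp add: f_def)
  qed
  have nint: "summable (\<lambda>k. \<integral>t. norm (f k t) \<partial>lborel)"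
  proof -
    define \<sigma> where "\<sigma> = complex_of_real (Re \<mu>)"
    have s0: "Re \<sigma> > 0" using assms by (simp add: \<sigma>_def)
    have Re_k': "Re (\<sigma> + of_nat k) > 0" for k using s0 by simp
    have pt: "complex_of_real (norm (f k t)) = (indicator {0<..} t *\<^sub>R (complex_of_real t powr (\<sigma> + of_nat k - 1) * exp (- (of_real b * of_real t)))) * (of_real (cmod w) ^ k / fact k)" for k t
    proof (cases "t > 0")
      case True
      have n1: "norm (complex_of_real t powr (\<mu> + of_nat k - 1)) = t powr (Re \<mu> + k - 1)"
        using True by (subst norm_powr_real_powr) auto
      have n2: "complex_of_real t powr (\<sigma> + of_nat k - 1) = of_real (t powr (Re \<mu> + k - 1))"
      proof -
        have "\<sigma> + of_nat k - 1 = complex_of_real (Re \<mu> + k - 1)" by (simp add: \<sigma>_def)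
        thus ?thesis using True powr_of_real[of t "Re \<mu> + k - 1"] by simp
      qed
      have n3: "exp (- (complex_of_real b * complex_of_real t)) = of_real (exp (- (b * t)))"
        by (simp add: of_real_exp)
      show ?thesis using True
        by (simp add: f_def norm_mult n1 n2 n3 norm_divide norm_power)
    next
      case False
      thus ?thesis by (simp add: f_def)
    qed
    have ival: "complex_of_real (\<integral>t. norm (f k t) \<partial>lborel) = Gamma \<sigma> * of_real b powr (-\<sigma>) * (((-\<sigma>) gchoose k) * (- of_real (cmod w) / of_real b)^k)" for k
    proof -
      have "complex_of_real (\<integral>t. norm (f k t) \<partial>lborel) = (\<integral>t. complex_of_real (norm (f k t)) \<partial>lborel)"
        by simp
      also have "\<dots> = Gamma (\<sigma> + of_nat k) * of_real b powr (-(\<sigma> + of_nat k)) * (of_real (cmod w) ^ k / fact k)"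
        unfolding pt integral_mult_left_zero using base_scaled(2)[OF Re_k' b0, of k]
        by (simp add: set_lebesgue_integral_def)
      also have "\<dots> = Gamma \<sigma> * of_real b powr (-\<sigma>) * (((-\<sigma>) gchoose k) * (- of_real (cmod w) / of_real b)^k)"
        by (rule coef_id[OF s0 b0])
      finally show ?thesis .
    qed
    have "norm (- complex_of_real (cmod w) / of_real b) < 1" using wb b0 by (simp add: norm_divide)
    hence "summable (\<lambda>k. Gamma \<sigma> * of_real b powr (-\<sigma>) * (((-\<sigma>) gchoose k) * (- of_real (cmod w) / of_real b)^k))"
      by (intro summable_mult sums_summable[OF gen_binomial_complex])
    hence "summable (\<lambda>k. complex_of_real (\<integral>t. norm (f k t) \<partial>lborel))" by (simp only: ival)
    thus ?thesis by simp
  qed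
  have S: "(\<lambda>k. integral\<^sup>L lborel (f k)) sums (\<integral>t. (\<Sum>k. f k t) \<partial>lborel)"
    and I: "integrable lborel (\<lambda>t. (\<Sum>k. f k t))"
    using sums_integral[OF fi _ nint] integrable_suminf[OF fi _ nint] fnorm by auto
  have sumf: "(\<lambda>t. (\<Sum>k. f k t)) = (\<lambda>t. indicator {0<..} t *\<^sub>R g t)"
    using fsums by (auto simp: sums_iff)
  show "set_integrable lborel {0<..} (\<lambda>t. of_real t powr (\<mu> - 1) * exp (- (a * of_real t)))"
    using I unfolding sumf set_integrable_def g_def .
  have S2: "(\<lambda>k. integral\<^sup>L lborel (f k)) sums (Gamma \<mu> * of_real b powr (-\<mu>) * (1 + w / of_real b) powr (-\<mu>))"
  proof -
    have "(\<lambda>k. Gamma \<mu> * of_real b powr (-\<mu>) * (((-\<mu>) gchoose k) * (w / of_real b)^k)) sums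
           (Gamma \<mu> * of_real b powr (-\<mu>) * (1 + w / of_real b) powr (-\<mu>))"
      by (intro sums_mult gen_binomial_complex wbn)
    moreover have "integral\<^sup>L lborel (f k) = Gamma \<mu> * of_real b powr (-\<mu>) * (((-\<mu>) gchoose k) * (w / of_real b)^k)" for k
      using coef_id[OF assms(2) b0, of k "-w"] by (simp add: fint)
    ultimately show ?thesis by simp
  qed
  have ab: "1 + w / of_real b = a / of_real b" using b0 by (simp add: w_def field_simps)
  have pw: "complex_of_real b powr (-\<mu>) * (a / of_real b) powr (-\<mu>) = a powr (-\<mu>)"
  proof -
    have "(of_real b * (a / of_real b)) powr (-\<mu>) = complex_of_real b powr (-\<mu>) * (a / of_real b) powr (-\<mu>)"
      using b0 by (intro powr_times_real_left) auto
    thus ?thesis using b0 by simp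
  qed
  have "(\<integral>t. (\<Sum>k. f k t) \<partial>lborel) = Gamma \<mu> * a powr (-\<mu>)"
    using sums_unique2[OF S S2] ab pw by (simp add: mult.assoc)
  thus "(LINT t:{0<..}|lborel. of_real t powr (\<mu> - 1) * exp (- (a * of_real t))) = Gamma \<mu> * a powr (-\<mu>)"
    unfolding sumf set_lebesgue_integral_def g_def .
qed

lemma set_integral_sum_fin:
  fixes f :: "'i \<Rightarrow> real \<Rightarrow> complex"
  assumes "finite I" "\<And>i. i \<in> I \<Longrightarrow> set_integrable M A (f i)"
  shows "(LINT x:A|M. (\<Sum>i\<in>I. f i x)) = (\<Sum>i\<in>I. LINT x:A|M. f i x)"
  unfolding set_lebesgue_integral_def scaleR_sum_right
  by (rule Bochner_Integration.integral_sum) (use assms in \<open>auto simp: set_integrable_def\<close>)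

lemma set_integral_reflect:
  fixes g :: "real \<Rightarrow> complex"
  shows "(LINT t:{..<0}|lborel. g t) = (LINT s:{0<..}|lborel. g (- s))"
proof -
  have "(LINT t:{..<0}|lborel. g t) = \<bar>-1::real\<bar> *\<^sub>R (\<integral>x. indicator {..<0} (0 + (-1) * x) *\<^sub>R g (0 + (-1) * x) \<partial>lborel)"
    unfolding set_lebesgue_integral_def by (rule lborel_integral_real_affine) simp
  also have "(\<lambda>x::real. indicator {..<0} (0 + (-1) * x) *\<^sub>R g (0 + (-1) * x)) = (\<lambda>x. indicator {0<..} x *\<^sub>R g (- x))"
    by (auto simp: indicator_def)
  finally show ?thesis by (simp add: set_lebesgue_integral_def)
qed

definition Mr :: "complex poly \<Rightarrow> complex \<Rightarrow> complex" where
  "Mr p r = of_nat (order r p)"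

definition GP :: "complex poly \<Rightarrow> complex \<Rightarrow> complex \<Rightarrow> complex" where
  "GP p z mu = (\<Sum>r\<in>roots_of p. (1/2 * exp (\<i> * pi * mu / 2) * Mr p r) * (- \<i> * (z - r)) powr (- mu))"

definition GM :: "complex poly \<Rightarrow> complex \<Rightarrow> complex \<Rightarrow> complex" where
  "GM p z mu = (\<Sum>r\<in>roots_of p. (1/2 * exp (3 * \<i> * pi * mu / 2) * Mr p r) * (\<i> * (z - r)) powr (- mu))"

lemma finite_roots: "p \<noteq> 0 \<Longrightarrow> finite (roots_of p)"
  unfolding roots_of_def by (rule poly_roots_finite)

lemma integrand_pos:
  assumes "\<xi> > 0"
  shows "gri_integrand p z mu \<xi> = (\<Sum>r\<in>roots_of p. (rGamma mu / 2 * exp (\<i> * pi * mu / 2) * Mr p r) *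
            (of_real \<xi> powr (mu - 1) * exp (- ((- \<i> * (z - r)) * of_real \<xi>))))"
proof -
  have pw: "complex_of_real \<xi> powr (mu - 1) = of_real \<xi> powr mu / of_real \<xi>"
    by (simp add: powr_diff)
  have tm: "- rGamma mu / (2 * complex_of_real pi) * (exp (\<i> * pi * mu / 2) * of_real \<xi> powr mu) *
      (Mr p r * (- 2 * of_real pi * (1/2) / of_real \<xi> * exp (\<i> * (- r) * of_real \<xi>))) * exp (\<i> * z * of_real \<xi>)
      = (rGamma mu / 2 * exp (\<i> * pi * mu / 2) * Mr p r) *
            (of_real \<xi> powr (mu - 1) * exp (- ((- \<i> * (z - r)) * of_real \<xi>)))" for r
  proof -
    have e: "exp (\<i> * (- r) * of_real \<xi>) * exp (\<i> * z * of_real \<xi>) = exp (- ((- \<i> * (z - r)) * of_real \<xi>))"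
      by (simp add: exp_add[symmetric] algebra_simps)
    show ?thesis unfolding pw e[symmetric] using assms by (simp add: field_simps)
  qed
  have "gri_integrand p z mu \<xi> = - rGamma mu / (2 * complex_of_real pi) * (exp (\<i> * pi * mu / 2) * of_real \<xi> powr mu) *
      (\<Sum>r\<in>roots_of p. Mr p r * (- 2 * of_real pi * (1/2) / of_real \<xi> * exp (\<i> * (- r) * of_real \<xi>))) * exp (\<i> * z * of_real \<xi>)"
    unfolding gri_integrand_def ipow_def FT_ln_poly_def FT_ln_def Htil_def Mr_def using assms by simp
  also have "\<dots> = (\<Sum>r\<in>roots_of p. - rGamma mu / (2 * complex_of_real pi) * (exp (\<i> * pi * mu / 2) * of_real \<xi> powr mu) *
      (Mr p r * (- 2 * of_real pi * (1/2) / of_real \<xi> * exp (\<i> * (- r) * of_real \<xi>))) * exp (\<i> * z * of_real \<xi>))"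
    by (simp only: sum_distrib_left sum_distrib_right)
  finally show ?thesis by (simp only: tm)
qed

lemma integrand_neg:
  assumes "s > 0"
  shows "gri_integrand p z mu (- s) = (\<Sum>r\<in>roots_of p. (rGamma mu / 2 * exp (3 * \<i> * pi * mu / 2) * Mr p r) *
            (of_real s powr (mu - 1) * exp (- ((\<i> * (z - r)) * of_real s))))"
proof -
  have pw: "complex_of_real s powr (mu - 1) = of_real s powr mu / of_real s"
    by (simp add: powr_diff)
  have tm: "- rGamma mu / (2 * complex_of_real pi) * (exp (3 * \<i> * pi * mu / 2) * of_real s powr mu) *
      (Mr p r * (- 2 * of_real pi * (- 1/2) / of_real (- s) * exp (\<i> * (- r) * of_real (- s)))) * exp (\<i> * z * of_real (- s))
      = (rGamma mu / 2 * exp (3 * \<i> * pi * mu / 2) * Mr p r) *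
            (of_real s powr (mu - 1) * exp (- ((\<i> * (z - r)) * of_real s)))" for r
  proof -
    have e: "exp (\<i> * (- r) * of_real (- s)) * exp (\<i> * z * of_real (- s)) = exp (- ((\<i> * (z - r)) * of_real s))"
      by (simp add: exp_add[symmetric] algebra_simps)
    show ?thesis unfolding pw e[symmetric] using assms by (simp add: field_simps)
  qed
  have "gri_integrand p z mu (- s) = - rGamma mu / (2 * complex_of_real pi) * (exp (3 * \<i> * pi * mu / 2) * of_real s powr mu) *
      (\<Sum>r\<in>roots_of p. Mr p r * (- 2 * of_real pi * (- 1/2) / of_real (- s) * exp (\<i> * (- r) * of_real (- s)))) * exp (\<i> * z * of_real (- s))"
    unfolding gri_integrand_def ipow_def FT_ln_poly_def FT_ln_def Htil_def Mr_def using assms by simp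
  also have "\<dots> = (\<Sum>r\<in>roots_of p. - rGamma mu / (2 * complex_of_real pi) * (exp (3 * \<i> * pi * mu / 2) * of_real s powr mu) *
      (Mr p r * (- 2 * of_real pi * (- 1/2) / of_real (- s) * exp (\<i> * (- r) * of_real (- s)))) * exp (\<i> * z * of_real (- s)))"
    by (simp only: sum_distrib_left sum_distrib_right)
  finally show ?thesis by (simp only: tm)
qed

lemma rGamma_Gamma: "Re mu > 0 \<Longrightarrow> rGamma mu * Gamma mu = 1"
  using Gamma_nonzero[OF Re_pos_not_nonpos_Int] by (simp add: rGamma_inverse_Gamma)

lemma gri_plus_val:
  assumes "p \<noteq> 0" "(z, mu) \<in> conv_plus p"
  shows "gri_plus p z mu = GP p z mu"
proof -
  have mu: "Re mu > 0" and im: "\<And>r. r \<in> roots_of p \<Longrightarrow> 0 < Im (z - r)" using assms(2) by (auto simp: conv_plus_def)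
  have "gri_plus p z mu = (LINT \<xi>:{0<..}|lborel. (\<Sum>r\<in>roots_of p. (rGamma mu / 2 * exp (\<i> * pi * mu / 2) * Mr p r) *
            (of_real \<xi> powr (mu - 1) * exp (- ((- \<i> * (z - r)) * of_real \<xi>)))))"
    unfolding gri_plus_def by (rule set_lebesgue_integral_cong) (auto simp: integrand_pos)
  also have "\<dots> = (\<Sum>r\<in>roots_of p. LINT \<xi>:{0<..}|lborel. (rGamma mu / 2 * exp (\<i> * pi * mu / 2) * Mr p r) *
            (of_real \<xi> powr (mu - 1) * exp (- ((- \<i> * (z - r)) * of_real \<xi>))))"
    by (rule set_integral_sum_fin[OF finite_roots[OF assms(1)]], rule set_integrable_mult_right,
        rule key_integral(1)) (use im mu in auto)
  also have "\<dots> = (\<Sum>r\<in>roots_of p. (rGamma mu / 2 * exp (\<i> * pi * mu / 2) * Mr p r) * (Gamma mu * (- \<i> * (z - r)) powr (- mu)))"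
  proof (intro sum.cong refl)
    fix r assume r: "r \<in> roots_of p"
    show "(LINT \<xi>:{0<..}|lborel. (rGamma mu / 2 * exp (\<i> * pi * mu / 2) * Mr p r) *
            (of_real \<xi> powr (mu - 1) * exp (- ((- \<i> * (z - r)) * of_real \<xi>)))) = (rGamma mu / 2 * exp (\<i> * pi * mu / 2) * Mr p r) * (Gamma mu * (- \<i> * (z - r)) powr (- mu))"
      by (simp only: set_integral_mult_right, subst key_integral(2)) (use im[OF r] mu in auto)
  qed
  also have "\<dots> = GP p z mu" unfolding GP_def using rGamma_Gamma[OF mu]
    by (intro sum.cong refl) (simp add: field_simps)
  finally show ?thesis .
qed

lemma gri_minus_val:
  assumes "p \<noteq> 0" "(z, mu) \<in> conv_minus p"
  shows "gri_minus p z mu = GM p z mu"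
proof -
  have mu: "Re mu > 0" and im: "\<And>r. r \<in> roots_of p \<Longrightarrow> Im (z - r) < 0" using assms(2) by (auto simp: conv_minus_def)
  have "gri_minus p z mu = (LINT s:{0<..}|lborel. gri_integrand p z mu (- s))"
    unfolding gri_minus_def by (rule set_integral_reflect)
  also have "\<dots> = (LINT s:{0<..}|lborel. (\<Sum>r\<in>roots_of p. (rGamma mu / 2 * exp (3 * \<i> * pi * mu / 2) * Mr p r) *
            (of_real s powr (mu - 1) * exp (- ((\<i> * (z - r)) * of_real s)))))"
    by (rule set_lebesgue_integral_cong) (auto simp: integrand_neg)
  also have "\<dots> = (\<Sum>r\<in>roots_of p. LINT s:{0<..}|lborel. (rGamma mu / 2 * exp (3 * \<i> * pi * mu / 2) * Mr p r) *
            (of_real s powr (mu - 1) * exp (- ((\<i> * (z - r)) * of_real s))))"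
    by (rule set_integral_sum_fin[OF finite_roots[OF assms(1)]], rule set_integrable_mult_right,
        rule key_integral(1)) (use im mu in auto)
  also have "\<dots> = (\<Sum>r\<in>roots_of p. (rGamma mu / 2 * exp (3 * \<i> * pi * mu / 2) * Mr p r) * (Gamma mu * (\<i> * (z - r)) powr (- mu)))"
  proof (intro sum.cong refl)
    fix r assume r: "r \<in> roots_of p"
    show "(LINT s:{0<..}|lborel. (rGamma mu / 2 * exp (3 * \<i> * pi * mu / 2) * Mr p r) *
            (of_real s powr (mu - 1) * exp (- ((\<i> * (z - r)) * of_real s)))) = (rGamma mu / 2 * exp (3 * \<i> * pi * mu / 2) * Mr p r) * (Gamma mu * (\<i> * (z - r)) powr (- mu))"
      by (simp only: set_integral_mult_right, subst key_integral(2)) (use im[OF r] mu in auto)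
  qed
  also have "\<dots> = GM p z mu" unfolding GM_def using rGamma_Gamma[OF mu]
    by (intro sum.cong refl) (simp add: field_simps)
  finally show ?thesis .
qed

definition FF :: "complex poly \<Rightarrow> complex \<Rightarrow> complex \<Rightarrow> complex" where
  "FF p z mu = exp (\<i> * pi * mu) * (\<Sum>r\<in>roots_of p. of_nat (order r p) / (z - r) powr mu)"

lemma nonpos_Real_ex: "(w::complex) \<in> \<real>\<^sub>\<le>\<^sub>0 \<Longrightarrow> \<exists>t::real. t \<le> 0 \<and> w = of_real t"
  by (auto simp: complex_nonpos_Reals_iff intro!: exI[of _ "Re w"] complex_eqI)

lemma cut_nonpos: "z \<in> cut_domain p \<Longrightarrow> r \<in> roots_of p \<Longrightarrow> z - r \<notin> \<real>\<^sub>\<le>\<^sub>0"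
  unfolding cut_domain_def by (auto dest!: nonpos_Real_ex simp: algebra_simps)

lemma plus_nonpos: "z \<in> dom_plus p \<Longrightarrow> r \<in> roots_of p \<Longrightarrow> - \<i> * (z - r) \<notin> \<real>\<^sub>\<le>\<^sub>0"
proof
  assume z: "z \<in> dom_plus p" and r: "r \<in> roots_of p" and "- \<i> * (z - r) \<in> \<real>\<^sub>\<le>\<^sub>0"
  then obtain t :: real where t: "t \<le> 0" "- \<i> * (z - r) = of_real t" using nonpos_Real_ex by blast
  hence "z = r - \<i> * of_real (- t)" by (auto simp: algebra_simps complex_eq_iff)
  moreover have "z \<noteq> r - \<i> * of_real (- t)"
  proof -
    have "\<forall>ta::real. ta \<ge> 0 \<longrightarrow> z \<noteq> r - \<i> * of_real ta" using z r unfolding dom_plus_def by blast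
    thus ?thesis using t(1) by (metis neg_0_le_iff_le)
  qed
  ultimately show False by blast
qed

lemma minus_nonpos: "z \<in> dom_minus p \<Longrightarrow> r \<in> roots_of p \<Longrightarrow> \<i> * (z - r) \<notin> \<real>\<^sub>\<le>\<^sub>0"
proof
  assume z: "z \<in> dom_minus p" and r: "r \<in> roots_of p" and "\<i> * (z - r) \<in> \<real>\<^sub>\<le>\<^sub>0"
  then obtain t :: real where t: "t \<le> 0" "\<i> * (z - r) = of_real t" using nonpos_Real_ex by blast
  hence "z = r + \<i> * of_real (- t)" by (auto simp: algebra_simps complex_eq_iff)
  moreover have "z \<noteq> r + \<i> * of_real (- t)"
  proof -
    have "\<forall>ta::real. ta \<ge> 0 \<longrightarrow> z \<noteq> r + \<i> * of_real ta" using z r unfolding dom_minus_def by blast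
    thus ?thesis using t(1) by (metis neg_0_le_iff_le)
  qed
  ultimately show False by blast
qed

lemma cut_ne: "z \<in> cut_domain p \<Longrightarrow> r \<in> roots_of p \<Longrightarrow> z \<noteq> r"
  unfolding cut_domain_def by force

lemma nonpos_nz: "(w::complex) \<notin> \<real>\<^sub>\<le>\<^sub>0 \<Longrightarrow> w \<noteq> 0" by auto

lemma FF_holo: "sep_holo (FF p) (cut_domain p)"
  unfolding sep_holo_def FF_def
proof (intro conjI allI ballI)
  fix mu
  show "(\<lambda>z. exp (\<i> * pi * mu) * (\<Sum>r\<in>roots_of p. of_nat (order r p) / (z - r) powr mu)) holomorphic_on cut_domain p"
    using cut_nonpos[of _ p] cut_ne[of _ p]
    by (intro holomorphic_intros) (auto simp: powr_def)
next
  fix z assume z: "z \<in> cut_domain p"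
  show "(\<lambda>mu. exp (\<i> * pi * mu) * (\<Sum>r\<in>roots_of p. of_nat (order r p) / (z - r) powr mu)) holomorphic_on UNIV"
    using cut_ne[OF z]
    by (intro holomorphic_intros) (auto simp: powr_def)
qed

lemma GP_holo: "sep_holo (GP p) (dom_plus p)"
  unfolding sep_holo_def GP_def
proof (intro conjI allI ballI)
  fix mu
  show "(\<lambda>z. \<Sum>r\<in>roots_of p. 1 / 2 * exp (\<i> * pi * mu / 2) * Mr p r * (- \<i> * (z - r)) powr - mu) holomorphic_on dom_plus p"
    using plus_nonpos[of _ p] by (intro holomorphic_intros) (auto simp: zero_neq_numeral[symmetric])
next
  fix z assume z: "z \<in> dom_plus p"
  show "(\<lambda>mu. \<Sum>r\<in>roots_of p. 1 / 2 * exp (\<i> * pi * mu / 2) * Mr p r * (- \<i> * (z - r)) powr - mu) holomorphic_on UNIV"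
    by (intro holomorphic_intros) auto
qed

lemma GM_holo: "sep_holo (GM p) (dom_minus p)"
  unfolding sep_holo_def GM_def
proof (intro conjI allI ballI)
  fix mu
  show "(\<lambda>z. \<Sum>r\<in>roots_of p. 1 / 2 * exp (3 * \<i> * pi * mu / 2) * Mr p r * (\<i> * (z - r)) powr - mu) holomorphic_on dom_minus p"
    using minus_nonpos[of _ p] by (intro holomorphic_intros) (auto simp: zero_neq_numeral[symmetric])
next
  fix z assume z: "z \<in> dom_minus p"
  show "(\<lambda>mu. \<Sum>r\<in>roots_of p. 1 / 2 * exp (3 * \<i> * pi * mu / 2) * Mr p r * (\<i> * (z - r)) powr - mu) holomorphic_on UNIV"
    by (intro holomorphic_intros) auto
qed

lemma Ln_rot:
  assumes "Re w > 0"
  shows "Ln (- \<i> * w) = Ln w - \<i> * pi / 2" "Ln (\<i> * w) = Ln w + \<i> * pi / 2"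
proof -
  have w: "w \<noteq> 0" using assms by auto
  have b: "\<bar>Im (Ln w)\<bar> < pi / 2" using Re_Ln_pos_lt_imp[OF assms] .
  have ei: "exp (\<i> * pi / 2) = \<i>"
    using cis_conv_exp[of "pi/2"] by (simp add: mult.commute)
  have "exp (Ln w - \<i> * pi / 2) = - \<i> * w"
    using w by (simp only: exp_diff exp_Ln ei) (simp add: field_simps)
  moreover have "Ln (exp (Ln w - \<i> * pi / 2)) = Ln w - \<i> * pi / 2" using b by (intro Ln_exp) auto
  ultimately show "Ln (- \<i> * w) = Ln w - \<i> * pi / 2" by simp
  have "exp (Ln w + \<i> * pi / 2) = \<i> * w"
    using w by (simp only: exp_add exp_Ln ei) (simp add: field_simps)
  moreover have "Ln (exp (Ln w + \<i> * pi / 2)) = Ln w + \<i> * pi / 2" using b by (intro Ln_exp) auto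
  ultimately show "Ln (\<i> * w) = Ln w + \<i> * pi / 2" by simp
qed

lemma sum_right_region:
  assumes "z \<in> right_region p"
  shows "GP p z mu + GM p z mu = FF p z mu"
proof -
  have tm: "1 / 2 * exp (\<i> * pi * mu / 2) * Mr p r * (- \<i> * (z - r)) powr - mu +
        1 / 2 * exp (3 * \<i> * pi * mu / 2) * Mr p r * (\<i> * (z - r)) powr - mu
        = exp (\<i> * pi * mu) * (of_nat (order r p) / (z - r) powr mu)" if r: "r \<in> roots_of p" for r
  proof -
    have Rw: "Re (z - r) > 0" using assms r by (auto simp: right_region_def)
    hence w: "z - r \<noteq> 0" by auto
    have w1: "- \<i> * (z - r) \<noteq> 0" "\<i> * (z - r) \<noteq> 0" using w by auto
    have p1: "(- \<i> * (z - r)) powr - mu = exp (\<i> * pi * mu / 2) * exp (- mu * Ln (z - r))"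
      using w1 unfolding powr_def Ln_rot[OF Rw] by (simp add: exp_add[symmetric] algebra_simps)
    have p2: "(\<i> * (z - r)) powr - mu = exp (- (\<i> * pi * mu / 2)) * exp (- mu * Ln (z - r))"
      using w1 unfolding powr_def Ln_rot[OF Rw] by (simp add: exp_add[symmetric] algebra_simps)
    have p3: "(z - r) powr mu = exp (mu * Ln (z - r))" using w by (simp add: powr_def)
    have e1: "exp (\<i> * pi * mu / 2) * exp (\<i> * pi * mu / 2) = exp (\<i> * pi * mu)"
      by (simp add: exp_add[symmetric] algebra_simps)
    have e2: "exp (3 * \<i> * pi * mu / 2) * exp (- (\<i> * pi * mu / 2)) = exp (\<i> * pi * mu)"
      by (simp add: exp_add[symmetric] algebra_simps)
    have e3: "exp (- mu * Ln (z - r)) = inverse (exp (mu * Ln (z - r)))" by (simp add: exp_minus[symmetric])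
    show ?thesis unfolding p1 p2 p3 e3 Mr_def
      using e1 e2 by (simp add: field_simps)
  qed
  show ?thesis unfolding GP_def GM_def FF_def sum.distrib[symmetric] sum_distrib_left
    by (intro sum.cong refl tm)
qed

lemma FF_dp_cont: assumes p: "p \<noteq> 0" shows "is_dp_cont p (FF p)"
proof -
  have A: "is_cont_plus p (GP p)" unfolding is_cont_plus_def using GP_holo gri_plus_val[OF p] by auto
  have B: "is_cont_minus p (GM p)" unfolding is_cont_minus_def using GM_holo gri_minus_val[OF p] by auto
  have C: "\<forall>z\<in>right_region p. \<forall>mu. FF p z mu = GP p z mu + GM p z mu"
    using sum_right_region by auto
  show ?thesis unfolding is_dp_cont_def using FF_holo A B C by blast
qed

definition Bd :: "complex poly \<Rightarrow> real" where
  "Bd p = (\<Sum>r\<in>roots_of p. cmod r) + 1"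

lemma Bd_bound:
  assumes "p \<noteq> 0" "r \<in> roots_of p"
  shows "cmod r < Bd p"
proof -
  have "cmod r \<le> (\<Sum>r\<in>roots_of p. cmod r)"
    using assms by (intro member_le_sum finite_roots) auto
  thus ?thesis by (simp add: Bd_def)
qed

lemma Bd_bounds:
  assumes "p \<noteq> 0" "r \<in> roots_of p"
  shows "Re r < Bd p" "Im r < Bd p" "- Bd p < Im r"
  using Bd_bound[OF assms] abs_Re_le_cmod[of r] abs_Im_le_cmod[of r] by linarith+

lemma Bd_ge1: "Bd p \<ge> 1" by (simp add: Bd_def sum_nonneg)

lemma right_region_open: "p \<noteq> 0 \<Longrightarrow> open (right_region p)"
proof -
  assume p: "p \<noteq> 0"
  have "right_region p = (\<Inter>r\<in>roots_of p. {z. Re z > Re r})" by (auto simp: right_region_def)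
  thus ?thesis using finite_roots[OF p] by (auto intro!: open_INT open_halfspace_Re_gt)
qed

lemma right_region_convex: "convex (right_region p)"
proof -
  have "right_region p = (\<Inter>r\<in>roots_of p. {z. Re z > Re r})" by (auto simp: right_region_def)
  thus ?thesis by (auto intro!: convex_INT convex_halfspace_Re_gt)
qed

lemma right_sub_plus: "right_region p \<subseteq> dom_plus p"
  by (auto simp: right_region_def dom_plus_def)

lemma right_sub_minus: "right_region p \<subseteq> dom_minus p"
  by (auto simp: right_region_def dom_minus_def)

lemma right_sub_cut: "right_region p \<subseteq> cut_domain p"
  by (force simp: right_region_def cut_domain_def)

lemma entire_agree:
  assumes "f holomorphic_on UNIV" "g holomorphic_on UNIV" "\<And>mu. Re mu > 0 \<Longrightarrow> f mu = g mu"
  shows "f mu = g mu"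
proof (rule analytic_continuation_open[where s = "{mu. Re mu > 0}" and s' = UNIV and f = f and g = g])
  show "{mu. Re mu > 0} \<noteq> {}" by (auto intro!: exI[of _ 1])
qed (use assms in \<open>auto simp: open_halfspace_Re_gt convex_connected\<close>)

lemma cont_plus_eq:
  assumes p: "p \<noteq> 0" and G: "is_cont_plus p G" and z: "z \<in> right_region p"
  shows "G z mu = GP p z mu"
proof -
  have hG: "sep_holo G (dom_plus p)" and eqG: "\<And>z mu. (z, mu) \<in> conv_plus p \<Longrightarrow> G z mu = gri_plus p z mu"
    using G by (auto simp: is_cont_plus_def)
  define s where "s = right_region p \<inter> {z. Im z > Bd p}"
  have step: "G z' nu = GP p z' nu" if nu: "Re nu > 0" and z': "z' \<in> right_region p" for nu z'
  proof (rule analytic_continuation_open[where s = s and s' = "right_region p" and f = "\<lambda>z. G z nu" and g = "\<lambda>z. GP p z nu"])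
    show "open s" unfolding s_def by (intro open_Int right_region_open p open_halfspace_Im_gt)
    show "s \<noteq> {}"
    proof -
      have "Complex (Bd p) (Bd p + 1) \<in> s" using Bd_bounds[OF p] by (auto simp: s_def right_region_def)
      thus ?thesis by auto
    qed
    show "connected (right_region p)" by (intro convex_connected right_region_convex)
    show "s \<subseteq> right_region p" by (auto simp: s_def)
    show "(\<lambda>z. G z nu) holomorphic_on right_region p"
      using hG right_sub_plus by (auto simp: sep_holo_def intro: holomorphic_on_subset)
    show "(\<lambda>z. GP p z nu) holomorphic_on right_region p"
    proof -
      have "(\<lambda>z. GP p z nu) holomorphic_on dom_plus p" using GP_holo[of p] by (simp add: sep_holo_def)
      thus ?thesis using holomorphic_on_subset right_sub_plus by blast
    qed
    show "G w nu = GP p w nu" if "w \<in> s" for w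
    proof -
      have "(w, nu) \<in> conv_plus p" using that nu Bd_bounds[OF p] by (force simp: s_def conv_plus_def)
      thus ?thesis using eqG gri_plus_val[OF p] by auto
    qed
  qed (use right_region_open[OF p] z' in auto)
  have zd: "z \<in> dom_plus p" using z right_sub_plus by auto
  show ?thesis
    by (rule entire_agree) (use hG GP_holo zd step z in \<open>auto simp: sep_holo_def\<close>)
qed

lemma cont_minus_eq:
  assumes p: "p \<noteq> 0" and G: "is_cont_minus p G" and z: "z \<in> right_region p"
  shows "G z mu = GM p z mu"
proof -
  have hG: "sep_holo G (dom_minus p)" and eqG: "\<And>z mu. (z, mu) \<in> conv_minus p \<Longrightarrow> G z mu = gri_minus p z mu"
    using G by (auto simp: is_cont_minus_def)
  define s where "s = right_region p \<inter> {z. Im z < - Bd p}"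
  have step: "G z' nu = GM p z' nu" if nu: "Re nu > 0" and z': "z' \<in> right_region p" for nu z'
  proof (rule analytic_continuation_open[where s = s and s' = "right_region p" and f = "\<lambda>z. G z nu" and g = "\<lambda>z. GM p z nu"])
    show "open s" unfolding s_def by (intro open_Int right_region_open p open_halfspace_Im_lt)
    show "s \<noteq> {}"
    proof -
      have "Complex (Bd p) (- Bd p - 1) \<in> s" using Bd_bounds[OF p] by (auto simp: s_def right_region_def)
      thus ?thesis by auto
    qed
    show "connected (right_region p)" by (intro convex_connected right_region_convex)
    show "s \<subseteq> right_region p" by (auto simp: s_def)
    show "(\<lambda>z. G z nu) holomorphic_on right_region p"
      using hG right_sub_minus by (auto simp: sep_holo_def intro: holomorphic_on_subset)
    show "(\<lambda>z. GM p z nu) holomorphic_on right_region p"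
    proof -
      have "(\<lambda>z. GM p z nu) holomorphic_on dom_minus p" using GM_holo[of p] by (simp add: sep_holo_def)
      thus ?thesis using holomorphic_on_subset right_sub_minus by blast
    qed
    show "G w nu = GM p w nu" if "w \<in> s" for w
    proof -
      have "(w, nu) \<in> conv_minus p" using that nu Bd_bounds[OF p] by (force simp: s_def conv_minus_def)
      thus ?thesis using eqG gri_minus_val[OF p] by auto
    qed
  qed (use right_region_open[OF p] z' in auto)
  have zd: "z \<in> dom_minus p" using z right_sub_minus by auto
  show ?thesis
    by (rule entire_agree) (use hG GM_holo zd step z in \<open>auto simp: sep_holo_def\<close>)
qed

lemma dp_cont_right:
  assumes p: "p \<noteq> 0" and D: "is_dp_cont p D" and z: "z \<in> right_region p"
  shows "D z mu = FF p z mu"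
proof -
  obtain Gp Gm where Gp: "is_cont_plus p Gp" and Gm: "is_cont_minus p Gm"
    and eq: "\<forall>z\<in>right_region p. \<forall>mu. D z mu = Gp z mu + Gm z mu"
    using D unfolding is_dp_cont_def by blast
  show ?thesis using eq z cont_plus_eq[OF p Gp z] cont_minus_eq[OF p Gm z] sum_right_region[OF z] by auto
qed

lemma dp_cont_eq:
  assumes p: "p \<noteq> 0" and D: "is_dp_cont p D" and z0: "z0 \<in> cut_domain p"
  shows "D z0 mu = FF p z0 mu"
proof -
  define R where "R = roots_of p"
  have fin: "finite R" using finite_roots[OF p] by (simp add: R_def)
  define R1 where "R1 = {r\<in>R. Im r = Im z0}"
  define R2 where "R2 = {r\<in>R. Im r \<noteq> Im z0}"
  define \<delta> where "\<delta> = Min (insert 1 ((\<lambda>r. \<bar>Im r - Im z0\<bar>) ` R2))"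
  define a where "a = Max (insert (Re z0 - 1) (Re ` R1))"
  have fin2: "finite R2" "finite R1" using fin by (auto simp: R1_def R2_def)
  have d0: "\<delta> > 0" unfolding \<delta>_def using fin2 by (subst Min_gr_iff) (auto simp: R2_def)
  have dle: "\<delta> \<le> \<bar>Im r - Im z0\<bar>" if "r \<in> R2" for r
    unfolding \<delta>_def using fin2 that by (intro Min_le) auto
  have R1lt: "Re r < Re z0" if "r \<in> R1" for r
  proof (rule ccontr)
    assume "\<not> Re r < Re z0"
    hence "z0 = r + of_real (Re z0 - Re r)" "Re z0 - Re r \<le> 0" using that
      by (auto simp: R1_def complex_eq_iff)
    moreover have "r \<in> roots_of p" using that by (simp add: R1_def R_def)
    ultimately show False using z0 unfolding cut_domain_def by blast
  qed
  have aR1: "Re r \<le> a" if "r \<in> R1" for r unfolding a_def using fin2 that by (intro Max_ge) auto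
  have alt: "a < Re z0" unfolding a_def using fin2 R1lt by (subst Max_less_iff) auto
  define S where "S = {z. Re z > a} \<inter> {z. Im z > Im z0 - \<delta>} \<inter> {z. Im z < Im z0 + \<delta>}"
  have So: "open S" unfolding S_def by (intro open_Int open_halfspace_Re_gt open_halfspace_Im_gt open_halfspace_Im_lt)
  have Sc: "connected S" unfolding S_def
    by (intro convex_connected convex_Int convex_halfspace_Re_gt convex_halfspace_Im_gt convex_halfspace_Im_lt)
  have z0S: "z0 \<in> S" using alt d0 by (auto simp: S_def)
  have Scut: "S \<subseteq> cut_domain p"
  proof
    fix z assume zS: "z \<in> S"
    show "z \<in> cut_domain p" unfolding cut_domain_def
    proof (intro CollectI ballI allI impI)
      fix r t assume r: "r \<in> roots_of p" and t: "(t::real) \<le> 0"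
      show "z \<noteq> r + of_real t"
      proof
        assume zr: "z = r + of_real t"
        hence "Im z = Im r" by simp
        hence "\<bar>Im r - Im z0\<bar> < \<delta>" using zS by (auto simp: S_def)
        hence "r \<in> R1" using dle r unfolding R1_def R2_def R_def by force
        hence "Re r \<le> a" by (rule aR1)
        moreover have "Re z > a" using zS by (auto simp: S_def)
        ultimately show False using zr t by simp
      qed
    qed
  qed
  define s where "s = S \<inter> right_region p"
  have so: "open s" unfolding s_def by (intro open_Int So right_region_open p)
  have sne: "s \<noteq> {}"
  proof -
    have "Complex (Bd p + \<bar>a\<bar>) (Im z0) \<in> s"
    proof -
      have "Re r < Bd p + \<bar>a\<bar>" if "r \<in> roots_of p" for r
        using Bd_bounds(1)[OF p that] abs_ge_zero[of a] by linarith
      thus ?thesis using d0 Bd_ge1[of p] by (auto simp: s_def S_def right_region_def)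
    qed
    thus ?thesis by auto
  qed
  have hD: "(\<lambda>z. D z mu) holomorphic_on S"
    using D Scut unfolding is_dp_cont_def sep_holo_def by (auto intro: holomorphic_on_subset)
  have hF: "(\<lambda>z. FF p z mu) holomorphic_on S"
    using FF_holo[of p] Scut unfolding sep_holo_def by (auto intro: holomorphic_on_subset)
  show ?thesis
    by (rule analytic_continuation_open[where s = s and s' = S and f = "\<lambda>z. D z mu" and g = "\<lambda>z. FF p z mu"])
       (use so So sne Sc hD hF z0S dp_cont_right[OF p D] in \<open>auto simp: s_def\<close>)
qed

lemma logderiv_poly:
  fixes p :: "complex poly"
  shows "poly p z \<noteq> 0 \<Longrightarrow> poly (pderiv p) z / poly p z = (\<Sum>r\<in>roots_of p. of_nat (order r p) / (z - r))"
proof (induction p rule: poly_root_order_induct)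
  case 0
  thus ?case by simp
next
  case (no_roots p)
  have "degree p = 0"
  proof (rule ccontr)
    assume "degree p \<noteq> 0"
    hence "\<not> constant (poly p)" by (subst constant_degree)
    with fundamental_theorem_of_algebra no_roots show False by blast
  qed
  hence "pderiv p = 0" by (simp add: pderiv_eq_0_iff)
  moreover have "roots_of p = {}" using no_roots by (auto simp: roots_of_def)
  ultimately show ?case by simp
next
  case (root p x n)
  let ?q = "[:-x, 1:] ^ n * p"
  have zx: "z \<noteq> x" and pz: "poly p z \<noteq> 0" using root.prems root.hyps by auto
  have p0: "p \<noteq> 0" using root.hyps by auto
  have IH: "poly (pderiv p) z / poly p z = (\<Sum>r\<in>roots_of p. of_nat (order r p) / (z - r))"
    using root.IH pz .
  have dq: "poly (pderiv ?q) z = (z - x) ^ n * poly (pderiv p) z + poly p z * (of_nat n * (z - x) ^ (n - 1))"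
    by (simp add: pderiv_mult pderiv_power pderiv_pCons)
  have "poly (pderiv ?q) z / poly ?q z = poly (pderiv p) z / poly p z + of_nat n / (z - x)"
  proof -
    have e: "(z - x) ^ n = (z - x) ^ (n - 1) * (z - x)" using root.hyps(1)
      by (metis One_nat_def Suc_pred power_Suc2)
    have nz: "(z - x) ^ (n - 1) \<noteq> 0" using zx by simp
    have gen: "\<And>A u P P' (c::complex). A \<noteq> 0 \<Longrightarrow> u \<noteq> 0 \<Longrightarrow> P \<noteq> 0 \<Longrightarrow>
        (A * u * P' + P * (c * A)) / (A * u * P) = P' / P + c / u" by (simp add: field_simps)
    have q1: "poly ?q z = (z - x) ^ (n - 1) * (z - x) * poly p z" by (simp add: e)
    have q2: "poly (pderiv ?q) z = (z - x) ^ (n - 1) * (z - x) * poly (pderiv p) z + poly p z * (of_nat n * (z - x) ^ (n - 1))"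
      unfolding dq e ..
    show ?thesis unfolding q1 q2 using zx pz nz by (intro gen) auto
  qed
  also have "roots_of ?q = insert x (roots_of p)" using root.hyps by (auto simp: roots_of_def)
  moreover have "x \<notin> roots_of p" using root.hyps by (simp add: roots_of_def)
  moreover have "order x ?q = n" using root p0 by (subst order_mult) (auto simp: order_power_n_n order_0I)
  moreover have "order y ?q = order y p" if "y \<in> roots_of p" for y
  proof -
    have "y \<noteq> x" using that root.hyps by (auto simp: roots_of_def)
    hence "order y ([:-x,1:] ^ n) = 0" by (intro order_0I) auto
    thus ?thesis using p0 by (subst order_mult) auto
  qed
  moreover have "finite (roots_of p)" using finite_roots[OF p0] .
  ultimately show ?case unfolding IH by (simp add: sum.insert)
qed

lemma deriv_inv_pow:
  fixes z r c :: complex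
  assumes "z \<noteq> r"
  shows "((\<lambda>w. c * ((-1)^k * fact k / (w - r)^Suc k)) has_field_derivative
          c * ((-1)^Suc k * fact (Suc k) / (z - r)^Suc (Suc k))) (at z)"
proof -
  have zr: "z - r \<noteq> 0" using assms by simp
  have "((\<lambda>w. c * ((-1)^k * fact k) * inverse ((w - r)^Suc k)) has_field_derivative
          c * ((-1)^k * fact k) * (- (inverse ((z - r)^Suc k) * (of_nat (Suc k) * (z - r)^k * 1) * inverse ((z - r)^Suc k)))) (at z)"
    using zr by (intro DERIV_cmult DERIV_inverse_fun derivative_eq_intros refl) auto
  moreover have "c * ((-1)^k * fact k) * (- (inverse ((z - r)^Suc k) * (of_nat (Suc k) * (z - r)^k * 1) * inverse ((z - r)^Suc k)))
      = c * ((-1)^Suc k * fact (Suc k) / (z - r)^Suc (Suc k))"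
  proof -
    have "- (inverse ((z - r)^Suc k) * (of_nat (Suc k) * (z - r)^k * 1) * inverse ((z - r)^Suc k)) = - of_nat (Suc k) / (z - r)^Suc (Suc k)"
    proof -
      have g: "\<And>u v n::complex. u \<noteq> 0 \<Longrightarrow> v \<noteq> 0 \<Longrightarrow> - (inverse (u * v) * (n * v * 1) * inverse (u * v)) = - n / (u * (u * v))"
        by (simp add: field_simps)
      show ?thesis unfolding power_Suc using zr by (intro g) auto
    qed
    thus ?thesis by (simp add: field_simps)
  qed
  moreover have "(\<lambda>w. c * ((-1)^k * fact k) * inverse ((w - r)^Suc k)) = (\<lambda>w. c * ((-1)^k * fact k / (w - r)^Suc k))"
    by (simp add: divide_inverse mult.assoc)
  ultimately show ?thesis by metis
qed

lemma higher_deriv_logsum: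
  fixes c :: "complex \<Rightarrow> complex"
  assumes R: "finite R"
  shows "z \<notin> R \<Longrightarrow> (deriv ^^ k) (\<lambda>z. \<Sum>r\<in>R. c r / (z - r)) z = (\<Sum>r\<in>R. c r * ((-1)^k * fact k / (z - r)^Suc k))"
proof (induction k arbitrary: z)
  case 0
  thus ?case by simp
next
  case (Suc k)
  have op: "open (- R)" using R by (simp add: finite_imp_closed open_Compl)
  have ev0: "eventually (\<lambda>w. w \<in> - R) (nhds z)" using eventually_nhds_in_open[OF op, of z] Suc.prems by auto
  have ev: "eventually (\<lambda>w. (deriv ^^ k) (\<lambda>z. \<Sum>r\<in>R. c r / (z - r)) w = (\<Sum>r\<in>R. c r * ((-1)^k * fact k / (w - r)^Suc k))) (nhds z)"
    by (rule eventually_mono[OF ev0], rule Suc.IH) simp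
  have "(deriv ^^ Suc k) (\<lambda>z. \<Sum>r\<in>R. c r / (z - r)) z = deriv ((deriv ^^ k) (\<lambda>z. \<Sum>r\<in>R. c r / (z - r))) z"
    by simp
  also have "\<dots> = deriv (\<lambda>w. \<Sum>r\<in>R. c r * ((-1)^k * fact k / (w - r)^Suc k)) z"
    by (rule deriv_cong_ev[OF ev refl])
  also have "\<dots> = (\<Sum>r\<in>R. c r * ((-1)^Suc k * fact (Suc k) / (z - r)^Suc (Suc k)))"
    using Suc.prems by (intro DERIV_imp_deriv DERIV_sum deriv_inv_pow) auto
  finally show ?case .
qed

lemma roots_open: "p \<noteq> 0 \<Longrightarrow> open (- roots_of p)"
  using finite_roots by (simp add: finite_imp_closed open_Compl)

lemma dp_posint:
  assumes p: "p \<noteq> 0" and mu: "mu \<in> \<int>" "Re mu > 0" and z0: "z0 \<notin> roots_of p"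
  shows "dp p z0 mu = FF p z0 mu"
proof -
  obtain m where m: "mu = of_int m" using mu(1) Ints_cases by blast
  have "m > 0" using mu(2) m by simp
  then obtain k where k: "m = int (Suc k)" by (metis gr0_implies_Suc pos_int_cases)
  have muk: "mu = of_nat (Suc k)" using m k by simp
  have fl: "nat \<lfloor>Re mu\<rfloor> - 1 = k" using muk by simp
  have ev0: "eventually (\<lambda>w. w \<in> - roots_of p) (nhds z0)"
    using eventually_nhds_in_open[OF roots_open[OF p]] z0 by auto
  have ev: "eventually (\<lambda>w. poly (pderiv p) w / poly p w = (\<Sum>r\<in>roots_of p. of_nat (order r p) / (w - r))) (nhds z0)"
    by (rule eventually_mono[OF ev0], rule logderiv_poly) (simp add: roots_of_def)
  have "(deriv ^^ k) (\<lambda>z. poly (pderiv p) z / poly p z) z0 = (deriv ^^ k) (\<lambda>z. \<Sum>r\<in>roots_of p. of_nat (order r p) / (z - r)) z0"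
    by (rule higher_deriv_cong_ev[OF ev refl])
  also have "\<dots> = (\<Sum>r\<in>roots_of p. of_nat (order r p) * ((-1)^k * fact k / (z0 - r)^Suc k))"
    by (rule higher_deriv_logsum[OF finite_roots[OF p] z0])
  finally have hd: "(deriv ^^ k) (\<lambda>z. poly (pderiv p) z / poly p z) z0 = \<dots>" .
  have rG: "rGamma mu = inverse (fact k)"
    using Gamma_fact[of k] muk by (simp add: rGamma_inverse_Gamma add.commute)
  have ex: "exp (\<i> * pi * mu) = (-1) ^ Suc k"
  proof -
    have "exp (\<i> * pi * mu) = exp (of_nat (Suc k) * (\<i> * pi))" using muk by (simp add: mult_ac)
    also have "\<dots> = exp (\<i> * pi) ^ Suc k" by (rule exp_of_nat_mult)
    finally show ?thesis by simp
  qed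
  have pw: "(z0 - r) powr mu = (z0 - r) ^ Suc k" if "r \<in> roots_of p" for r
    unfolding muk by (rule powr_nat') simp
  have "dp p z0 mu = - rGamma mu * (deriv ^^ k) (\<lambda>z. poly (pderiv p) z / poly p z) z0"
  proof -
    have c: "(mu \<in> \<int> \<and> 0 < Re mu) = True" using mu by simp
    show ?thesis unfolding dp_def by (simp only: c if_True fl)
  qed
  also have "\<dots> = (\<Sum>r\<in>roots_of p. - inverse (fact k) * (of_nat (order r p) * ((-1)^k * fact k / (z0 - r)^Suc k)))"
    unfolding hd rG by (simp add: sum_distrib_left)
  also have "\<dots> = (\<Sum>r\<in>roots_of p. (-1) ^ Suc k * (of_nat (order r p) / (z0 - r) powr mu))"
    by (intro sum.cong refl) (simp add: pw field_simps)
  also have "\<dots> = FF p z0 mu" unfolding FF_def ex by (simp add: sum_distrib_left)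
  finally show ?thesis .
qed

lemma dp_nonint:
  assumes p: "p \<noteq> 0" and mu: "mu \<notin> \<int>" and z0: "z0 \<in> cut_domain p"
  shows "dp p z0 mu = FF p z0 mu"
proof -
  have c1: "(mu \<in> \<int>) = False" using mu by simp
  have "dp p z0 mu = (THE v. \<exists>D. is_dp_cont p D \<and> D z0 mu = v)"
    unfolding dp_def by (simp only: c1 simp_thms if_False)
  also have "\<dots> = FF p z0 mu"
  proof (rule the_equality)
    show "\<exists>D. is_dp_cont p D \<and> D z0 mu = FF p z0 mu"
      by (rule exI[of _ "FF p"]) (simp add: FF_dp_cont[OF p])
  next
    fix v assume "\<exists>D. is_dp_cont p D \<and> D z0 mu = v"
    then obtain D where "is_dp_cont p D" "D z0 mu = v" by blast
    thus "v = FF p z0 mu" using dp_cont_eq[OF p _ z0] by metis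
  qed
  finally show ?thesis .
qed

lemma right_region_ne: "p \<noteq> 0 \<Longrightarrow> right_region p \<noteq> {}"
  using Bd_bounds(1) by (auto simp: right_region_def intro!: exI[of _ "Complex (Bd p) 0"])

lemma dp_nonposint:
  assumes p: "p \<noteq> 0" and mu: "mu \<in> \<int>" "\<not> Re mu > 0" and z0: "z0 \<notin> roots_of p"
  shows "dp p z0 mu = FF p z0 mu"
proof -
  obtain m where m: "mu = of_int m" using mu(1) Ints_cases by blast
  have "m \<le> 0" using mu(2) m by simp
  then obtain n where n: "m = - int n" by (metis nonpos_int_cases)
  have mun: "mu = - of_nat n" using m n by simp
  define E where "E = (\<lambda>z. (-1) ^ n * (\<Sum>r\<in>roots_of p. of_nat (order r p) * (z - r) ^ n))"
  have Eh: "E holomorphic_on UNIV" unfolding E_def by (intro holomorphic_intros)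
  have ex: "exp (\<i> * pi * mu) = (-1) ^ n"
  proof -
    have "exp (\<i> * pi * mu) = inverse (exp (of_nat n * (\<i> * pi)))" using mun by (simp add: mult_ac exp_minus)
    also have "exp (of_nat n * (\<i> * pi)) = exp (\<i> * pi) ^ n" by (rule exp_of_nat_mult)
    finally show ?thesis by (simp add: power_inverse[symmetric])
  qed
  have EF: "E z = FF p z mu" if "z \<notin> roots_of p" for z
  proof -
    have "of_nat (order r p) / (z - r) powr mu = of_nat (order r p) * (z - r) ^ n" if "r \<in> roots_of p" for r
    proof -
      have "z - r \<noteq> 0" using that \<open>z \<notin> roots_of p\<close> by auto
      thus ?thesis using mun by (simp add: powr_minus powr_nat' divide_inverse)
    qed
    thus ?thesis unfolding E_def FF_def ex by (intro arg_cong2[where f = "(*)"] refl sum.cong) auto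
  qed
  have "dp p z0 mu = (THE v. \<exists>D E. is_dp_cont p D \<and> E holomorphic_on UNIV \<and>
                 (\<forall>z\<in>cut_domain p. E z = D z mu) \<and> E z0 = v)"
  proof -
    have c1: "(0 < Re mu) = False" using mu by simp
    have c2: "(mu \<in> \<int>) = True" using mu by simp
    show ?thesis unfolding dp_def by (simp only: c1 c2 simp_thms if_True if_False)
  qed
  also have "\<dots> = FF p z0 mu"
  proof (rule the_equality)
    show "\<exists>D E'. is_dp_cont p D \<and> E' holomorphic_on UNIV \<and> (\<forall>z\<in>cut_domain p. E' z = D z mu) \<and> E' z0 = FF p z0 mu"
      using FF_dp_cont[OF p] Eh EF z0 cut_ne[of _ p] by blast
  next
    fix v assume "\<exists>D E'. is_dp_cont p D \<and> E' holomorphic_on UNIV \<and> (\<forall>z\<in>cut_domain p. E' z = D z mu) \<and> E' z0 = v"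
    then obtain D E' where D: "is_dp_cont p D" and E': "E' holomorphic_on UNIV"
      and eq: "\<forall>z\<in>cut_domain p. E' z = D z mu" and v: "E' z0 = v" by blast
    have "E' z0 = E z0"
    proof (rule analytic_continuation_open[where s = "right_region p" and s' = UNIV and f = E' and g = E])
      show "E' z = E z" if "z \<in> right_region p" for z
      proof -
        have zc: "z \<in> cut_domain p" using that right_sub_cut by auto
        hence "z \<notin> roots_of p" using cut_ne by blast
        thus ?thesis using eq zc dp_cont_eq[OF p D zc] EF by auto
      qed
    qed (use right_region_open[OF p] right_region_ne[OF p] E' Eh in \<open>auto simp: convex_connected\<close>)
    thus "v = FF p z0 mu" using v EF[OF z0] by simp
  qed
  finally show ?thesis .
qed

theorem mainTheorem2:
  fixes p :: "complex poly"
  assumes "degree p > 0"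
  shows "(\<forall>mu z0.
            (mu \<notin> \<int> \<longrightarrow> (\<forall>r\<in>roots_of p. \<forall>t::real. t \<le> 0 \<longrightarrow> z0 \<noteq> r + of_real t)) \<and>
            (mu \<in> \<int> \<longrightarrow> z0 \<notin> roots_of p) \<longrightarrow>
            dp p z0 mu = exp (\<i> * pi * mu) * (\<Sum>r\<in>roots_of p. of_nat (order r p) / (z0 - r) powr mu))
       \<and> (\<forall>mu z0. (\<forall>r\<in>roots_of p. Re r < Re z0) \<longrightarrow>
            dp p z0 mu = exp (\<i> * pi * mu) * (\<Sum>r\<in>roots_of p. of_nat (order r p) / (z0 - r) powr mu))"
proof -
  have p: "p \<noteq> 0" using assms by auto
  have main: "dp p z0 mu = FF p z0 mu"
    if "mu \<notin> \<int> \<longrightarrow> z0 \<in> cut_domain p" "mu \<in> \<int> \<longrightarrow> z0 \<notin> roots_of p" for mu z0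
  proof (cases "mu \<in> \<int>")
    case True
    thus ?thesis using that dp_posint[OF p] dp_nonposint[OF p] by blast
  next
    case False
    thus ?thesis using that dp_nonint[OF p] by blast
  qed
  show ?thesis
  proof (intro conjI allI impI)
    fix mu z0 :: complex
    assume h: "(mu \<notin> \<int> \<longrightarrow> (\<forall>r\<in>roots_of p. \<forall>t::real. t \<le> 0 \<longrightarrow> z0 \<noteq> r + of_real t)) \<and>
            (mu \<in> \<int> \<longrightarrow> z0 \<notin> roots_of p)"
    have "mu \<notin> \<int> \<longrightarrow> z0 \<in> cut_domain p" using h by (simp add: cut_domain_def)
    thus "dp p z0 mu = exp (\<i> * pi * mu) * (\<Sum>r\<in>roots_of p. of_nat (order r p) / (z0 - r) powr mu)"
      using main h by (simp add: FF_def)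
  next
    fix mu z0 :: complex
    assume h: "\<forall>r\<in>roots_of p. Re r < Re z0"
    hence zr: "z0 \<in> right_region p" by (simp add: right_region_def)
    hence zc: "z0 \<in> cut_domain p" using right_sub_cut by auto
    hence "z0 \<notin> roots_of p" using cut_ne by blast
    thus "dp p z0 mu = exp (\<i> * pi * mu) * (\<Sum>r\<in>roots_of p. of_nat (order r p) / (z0 - r) powr mu)"
      using main zc by (simp add: FF_def)
  qed
qed

end
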